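(* Let $v$ be as defined below, and on the arc $\Gamma_1=\{Q=1,\ x_0>1,\ \theta=0\}$ (parametrised by $x_0\in(1,\infty)$) regard $f=p^6/18$ as a function of $v\in(0,\infty)$. Then $f''(v)>0$, i.e. $f$ is strictly convex as a function of $v$; indeed $f'(v)=H/v$ and $\frac{d}{dx_0}(H/v)=\frac{p^2}{v}(p^2-x_0)>0$.
   Context: On $\mathbb R^3$: $r^2=x_1^2+x_2^2$, $Q=x_0^2-\tfrac12r^2$, $H=x_0r^2$, $p=(4x_0^2+r^2)^{1/4}$. On the arc with $Q=1$, $x_0>1$, we have $r^2=2(x_0^2-1)$. $v\colon(1,\infty)\to(0,\infty)$ is a positive solution of $\frac{dv}{dx_0}=\frac{\sqrt{3x_0^2-1}}{\sqrt2(x_0^2-1)}v$, extended by $v(1)=0$ (so $v$ is increasing with $\frac{dv}{dx_0}=\frac{p^2}{r^2}v$). *)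

theory Defs
  imports "HOL-Analysis.Analysis"
begin

text \<open>Functions on R^3 expressed through x0 and r^2 = x1^2 + x2^2.\<close>
definition Qf :: "real \<Rightarrow> real \<Rightarrow> real" where "Qf x0 r2 = x0^2 - r2 / 2"
definition Hf :: "real \<Rightarrow> real \<Rightarrow> real" where "Hf x0 r2 = x0 * r2"
definition pf :: "real \<Rightarrow> real \<Rightarrow> real" where "pf x0 r2 = (4 * x0^2 + r2) powr (1/4)"

text \<open>On the arc Gamma_1 = {Q = 1, x0 > 1, theta = 0}: r^2 = 2(x0^2 - 1).\<close>
definition arc_r2 :: "real \<Rightarrow> real" where "arc_r2 x0 = 2 * (x0^2 - 1)"
definition arc_H :: "real \<Rightarrow> real" where "arc_H x0 = Hf x0 (arc_r2 x0)"
definition arc_p :: "real \<Rightarrow> real" where "arc_p x0 = pf x0 (arc_r2 x0)"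
definition arc_f :: "real \<Rightarrow> real" where "arc_f x0 = arc_p x0 ^ 6 / 18"

end

theory Submission
  imports Defs
begin

lemma sq_gt: fixes x :: real assumes "x > 1" shows "x^2 > 1" "x^2 > x"
proof -
  have "x*x > x*1" using assms by (intro mult_strict_left_mono) auto
  thus "x^2 > x" by (simp add: power2_eq_square)
  thus "x^2 > 1" using assms by simp
qed

lemma p_facts:
  fixes x :: real assumes "x > 1"
  shows "arc_p x ^ 2 = sqrt (6*x^2-2)" "arc_p x ^ 6 = (6*x^2-2) * sqrt (6*x^2-2)"
proof -
  have e: "arc_p x = (6*x^2-2) powr (1/4)"
    unfolding arc_p_def pf_def arc_r2_def by (simp add: algebra_simps)
  have pos: "6*x^2-2 > 0" using sq_gt[OF assms] by simp
  have "arc_p x ^ 2 = (6*x^2-2) powr (1/2)"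
    using pos by (simp add: e powr_power)
  thus a: "arc_p x ^ 2 = sqrt (6*x^2-2)" using pos by (simp add: powr_half_sqrt)
  have "arc_p x ^ 6 = (arc_p x ^ 2)^3" by simp
  also have "\<dots> = (6*x^2-2) * sqrt (6*x^2-2)" using pos
    by (simp add: a power3_eq_cube)
  finally show "arc_p x ^ 6 = (6*x^2-2) * sqrt (6*x^2-2)" .
qed

lemma g_eq:
  fixes x :: real assumes "x > 1"
  shows "sqrt (3 * x^2 - 1) / (sqrt 2 * (x^2 - 1)) = sqrt (6*x^2-2) / (2*(x^2-1))"
proof -
  have e: "sqrt (6*x^2-2) = sqrt 2 * sqrt (3*x^2-1)"
    by (simp add: real_sqrt_mult[symmetric] algebra_simps)
  have "sqrt 2 * sqrt 2 = (2::real)" by simp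
  hence "sqrt (6*x^2-2) / (2*(x^2-1)) = (sqrt 2 * sqrt (3*x^2-1)) / (sqrt 2 * (sqrt 2 * (x^2-1)))"
    by (simp add: e mult.assoc[symmetric])
  also have "\<dots> = sqrt (3*x^2-1) / (sqrt 2 * (x^2-1))"
    by (rule mult_divide_mult_cancel_left) simp
  finally show ?thesis by simp
qed

lemma s_ineqs:
  fixes x :: real assumes "x > 1"
  shows "sqrt (6*x^2-2) \<ge> x + 1" "sqrt (6*x^2-2) * x \<ge> 2*(x^2-1)" "sqrt (6*x^2-2) > x"
proof -
  have "(x-1)*(5*x+3) \<ge> 0" using assms by simp
  hence "(x+1)^2 \<le> 6*x^2-2" by (simp add: power2_eq_square algebra_simps)
  thus a: "sqrt (6*x^2-2) \<ge> x + 1" using assms by (metis real_le_rsqrt)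
  thus "sqrt (6*x^2-2) > x" by simp
  have k: "\<And>y::real. y > 1 \<Longrightarrow> (2*(y-1))^2 \<le> (6*y-2) * y"
  proof -
    fix y :: real assume "y > 1"
    hence "2*y*y + 6*y - 4 \<ge> 0" by (smt (verit) mult_nonneg_nonneg)
    thus "(2*(y-1))^2 \<le> (6*y-2) * y" by (simp add: power2_eq_square algebra_simps)
  qed
  have "(2*(x^2-1))^2 \<le> (6*x^2-2) * x^2" using k[OF sq_gt(1)[OF assms]] .
  hence "2*(x^2-1) \<le> sqrt ((6*x^2-2) * x^2)" by (metis real_le_rsqrt)
  thus "sqrt (6*x^2-2) * x \<ge> 2*(x^2-1)" using assms by (simp add: real_sqrt_mult)
qed

definition GG :: "real \<Rightarrow> real" where "GG x = sqrt (6*x^2-2) / (2*(x^2-1))"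

lemma GG_facts:
  fixes x :: real assumes "x > 1"
  shows "GG x > 0" "2 * GG x * (x - 1) \<ge> 1" "GG x * x \<ge> 1" "GG x * arc_H x = x * sqrt (6*x^2-2)"
proof -
  have d: "x^2 - 1 > 0" using sq_gt[OF assms] by simp
  have sp: "sqrt (6*x^2-2) > 0" using sq_gt[OF assms] by simp
  show "GG x > 0" unfolding GG_def using d sp by simp
  have e: "2 * GG x * (x^2-1) = sqrt (6*x^2-2)" unfolding GG_def using d by (simp add: field_simps)
  have f: "x^2 - 1 = (x-1)*(x+1)" by (simp add: power2_eq_square algebra_simps)
  have "(2 * GG x * (x - 1)) * (x+1) \<ge> 1 * (x+1)" using e f s_ineqs(1)[OF assms]
    by (simp add: mult.assoc)
  thus "2 * GG x * (x - 1) \<ge> 1" using assms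
    by (meson mult_le_cancel_right_pos less_trans zero_less_one add_pos_pos)
  have "(GG x * x) * (2*(x^2-1)) \<ge> 1 * (2*(x^2-1))" using e s_ineqs(2)[OF assms]
    by (simp add: algebra_simps)
  thus "GG x * x \<ge> 1" using d by (simp add: mult_le_cancel_right_pos)
  show "GG x * arc_H x = x * sqrt (6*x^2-2)"
    unfolding arc_H_def Hf_def arc_r2_def using e by (simp add: algebra_simps)
qed

lemma arc_f_deriv:
  fixes x :: real assumes "x > 1"
  shows "(arc_f has_real_derivative x * sqrt (6*x^2-2)) (at x)"
proof -
  let ?F = "\<lambda>y::real. (6*y^2-2) * sqrt (6*y^2-2) / 18"
  have pos: "6*x^2-2 > 0" using sq_gt[OF assms] by simp
  let ?s = "sqrt (6*x^2-2)"
  have sp: "?s > 0" using pos by simp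
  have d1: "((\<lambda>y::real. 6*y^2-2) has_real_derivative 12*x) (at x)"
    by (auto intro!: derivative_eq_intros)
  have d2: "((\<lambda>y. sqrt (6*y^2-2)) has_real_derivative inverse ?s / 2 * (12*x)) (at x)"
    using DERIV_chain2[OF DERIV_real_sqrt[OF pos] d1] .
  have "(?F has_real_derivative (12*x * ?s + inverse ?s / 2 * (12*x) * (6*x^2-2)) / 18) (at x)"
    using DERIV_cdivide[OF DERIV_mult[OF d1 d2], of 18] .
  moreover have "(12*x * ?s + inverse ?s / 2 * (12*x) * (6*x^2-2)) / 18 = x * ?s"
  proof -
    have "?s * ?s = 6*x^2-2" using pos by simp
    hence "inverse ?s * (6*x^2-2) = ?s" using sp by (metis nonzero_mult_div_cancel_left divide_inverse_commute less_irrefl)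
    hence "inverse ?s / 2 * (12*x) * (6*x^2-2) = 6*x*?s" by (simp add: algebra_simps)
    thus ?thesis by simp
  qed
  ultimately have "(?F has_real_derivative x * sqrt (6*x^2-2)) (at x)" by metis
  thus ?thesis
    by (rule has_field_derivative_transform_within_open[where S="{1<..}"])
       (use assms in \<open>auto simp: arc_f_def p_facts\<close>)
qed

theorem mainTheorem9:
  fixes v :: "real \<Rightarrow> real"
  assumes pos: "\<forall>x>1. v x > 0"
    and ode: "\<forall>x>1. (v has_real_derivative
               (sqrt (3 * x^2 - 1) / (sqrt 2 * (x^2 - 1)) * v x)) (at x)"
    and v1: "v 1 = 0"
  shows "v ` {1<..} = {0<..} \<and>
    (\<forall>x>1.
      ((\<lambda>w. arc_f (the_inv_into {1<..} v w)) has_real_derivative (arc_H x / v x)) (at (v x)) \<and>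
      (\<exists>D>0. ((\<lambda>w. arc_H (the_inv_into {1<..} v w) / w) has_real_derivative D) (at (v x)))) \<and>
    (\<forall>x>1.
      ((\<lambda>y. arc_H y / v y) has_real_derivative
         (arc_p x ^ 2 / v x * (arc_p x ^ 2 - x))) (at x) \<and>
      arc_p x ^ 2 / v x * (arc_p x ^ 2 - x) > 0)"
proof -
  have dv: "(v has_real_derivative GG x * v x) (at x)" if "x > 1" for x
  proof -
    have "(v has_real_derivative (sqrt (3 * x^2 - 1) / (sqrt 2 * (x^2 - 1)) * v x)) (at x)"
      using ode that by blast
    thus ?thesis unfolding GG_def g_eq[OF that] .
  qed
  have ct: "isCont v x" if "x > 1" for x using DERIV_isCont[OF dv[OF that]] .
  have cton: "continuous_on {a..b} v" if "a > 1" for a b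
    using ct that by (intro continuous_at_imp_continuous_on) auto
  have mono: "v a < v b" if "1 < a" "a < b" for a b
  proof (rule DERIV_pos_imp_increasing_open[OF that(2) _ cton[OF that(1)]])
    fix y assume "a < y" "y < b"
    hence "y > 1" using that by simp
    thus "\<exists>D. (v has_real_derivative D) (at y) \<and> D > 0"
      using dv[of y] GG_facts(1)[of y] pos by (intro exI[of _ "GG y * v y"]) auto
  qed
  have inj: "inj_on v {1<..}"
    by (rule inj_onI) (metis greaterThan_iff linorder_neqE_linordered_idom mono order_less_irrefl)
  have low: "v x ^ 2 \<le> v 2 ^ 2 * (x - 1)" if "1 < x" "x \<le> 2" for x
  proof -
    let ?h = "\<lambda>y. v y ^ 2 / (y - 1)"
    have "?h x \<le> ?h 2"
    proof (rule DERIV_nonneg_imp_increasing_open[OF that(2)])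
      fix y assume y: "x < y" "y < 2"
      hence y1: "y > 1" using that by simp
      have dh: "(?h has_real_derivative
          ((2 * v y * (GG y * v y)) * (y - 1) - v y ^ 2 * 1) / ((y - 1)^2)) (at y)"
        using y1 by (auto intro!: derivative_eq_intros dv simp: power2_eq_square)
      have "(2 * v y * (GG y * v y)) * (y - 1) - v y ^ 2 * 1 = v y ^ 2 * (2 * GG y * (y - 1) - 1)"
        by (simp add: power2_eq_square algebra_simps)
      also have "\<dots> \<ge> 0" using GG_facts(2)[OF y1] by simp
      finally show "\<exists>D. (?h has_real_derivative D) (at y) \<and> D \<ge> 0"
        using dh by (intro exI[of _ "((2 * v y * (GG y * v y)) * (y - 1) - v y ^ 2 * 1) / ((y - 1)^2)"]) auto
    next
      have "continuous_on {x..2} (\<lambda>y. v y ^ 2)"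
        using cton[OF that(1)] by (intro continuous_intros)
      thus "continuous_on {x..2} ?h" using that cton[OF that(1)]
        by (intro continuous_intros) auto
    qed
    thus ?thesis using that by (simp add: divide_simps split: if_splits)
  qed
  have high: "v x \<ge> v 2 / 2 * x" if "2 \<le> x" for x
  proof -
    let ?k = "\<lambda>y. v y / y"
    have "?k 2 \<le> ?k x"
    proof (rule DERIV_nonneg_imp_increasing_open[OF that])
      fix y assume y: "2 < y" "y < x"
      hence y1: "y > 1" by simp
      have dh: "(?k has_real_derivative ((GG y * v y) * y - v y * 1) / (y^2)) (at y)"
        using y1 by (auto intro!: derivative_eq_intros dv simp: power2_eq_square)
      have "(GG y * v y) * y - v y * 1 = v y * (GG y * y - 1)"
        by (simp add: algebra_simps)
      also have "\<dots> \<ge> 0" using GG_facts(3)[OF y1] pos y1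
        by (intro mult_nonneg_nonneg) (auto simp: less_imp_le)
      finally show "\<exists>D. (?k has_real_derivative D) (at y) \<and> D \<ge> 0"
        using dh by (intro exI[of _ "((GG y * v y) * y - v y * 1) / (y^2)"]) auto
    next
      show "continuous_on {2..x} ?k" using cton[of 2 x]
        by (intro continuous_intros) auto
    qed
    thus ?thesis using that by (simp add: field_simps)
  qed
  have v2: "v 2 > 0" using pos by simp
  have img: "v ` {1<..} = {0<..}"
  proof
    show "v ` {1<..} \<subseteq> {0<..}" using pos by auto
  next
    show "{0<..} \<subseteq> v ` {1<..}"
    proof
      fix y :: real assume "y \<in> {0<..}"
      hence y: "y > 0" by simp
      define a where "a = 1 + min (1/2) (y^2 / (2 * v 2 ^ 2))"
      define b where "b = max 2 (4 * y / v 2)"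
      have a1: "a > 1" "a \<le> 2" using y v2 unfolding a_def by auto
      have "v a ^ 2 \<le> v 2 ^ 2 * (a - 1)" using low a1 by simp
      also have "\<dots> \<le> v 2 ^ 2 * (y^2 / (2 * v 2 ^ 2))"
        using v2 unfolding a_def by (intro mult_left_mono) auto
      also have "\<dots> = y^2 / 2" using v2 by simp
      also have "\<dots> < y^2" using y by simp
      finally have "v a ^ 2 < y ^ 2" .
      hence va: "v a \<le> y" using y by (smt (verit) power_mono pos a1(1))
      have b2: "b \<ge> 2" unfolding b_def by simp
      have "v b \<ge> v 2 / 2 * b" using high[OF b2] .
      moreover have "v 2 / 2 * b \<ge> v 2 / 2 * (4 * y / v 2)"
        using v2 unfolding b_def by (intro mult_left_mono) auto
      moreover have "v 2 / 2 * (4 * y / v 2) = 2 * y" using v2 by simp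
      ultimately have vb: "y \<le> v b" using y by linarith
      have "a \<le> b" using a1 b2 by simp
      then obtain z where "a \<le> z" "z \<le> b" "v z = y"
        using IVT'[of v a y b, OF va vb _ cton[OF a1(1)]] by auto
      thus "y \<in> v ` {1<..}" using a1 by force
    qed
  qed
  define gi where "gi = the_inv_into {1<..} v"
  have gi1: "gi (v y) = y" if "y > 1" for y
    unfolding gi_def using the_inv_into_f_f[OF inj] that by simp
  have gi2: "v (gi w) = w" "gi w > 1" if "w > 0" for w
  proof -
    have w: "w \<in> v ` {1<..}" using img that by simp
    show "v (gi w) = w" unfolding gi_def using f_the_inv_into_f[OF inj w] .
    show "gi w > 1" unfolding gi_def using the_inv_into_into[OF inj w, of "{1<..}"] by simp
  qed
  have dgi: "(gi has_real_derivative inverse (GG x * v x)) (at (v x))" if x: "x > 1" for x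
  proof (rule DERIV_inverse_function[where f=v and a=0 and b="v x + 1"])
    show "(v has_real_derivative GG x * v x) (at (gi (v x)))" using gi1[OF x] dv[OF x] by simp
    show "GG x * v x \<noteq> 0" using GG_facts(1)[OF x] pos[rule_format, OF x] by simp
    show "0 < v x" "v x < v x + 1" using pos[rule_format, OF x] by auto
    show "\<And>y. 0 < y \<Longrightarrow> y < v x + 1 \<Longrightarrow> v (gi y) = y" using gi2 by simp
    show "isCont gi (v x)"
    proof (rule isCont_inverse_function[where d="(x-1)/2" and f=v and x=x])
      show "0 < (x-1)/2" using x by simp
      fix z assume "\<bar>z - x\<bar> \<le> (x-1)/2"
      hence "x - z \<le> (x-1)/2" by (metis abs_ge_self abs_minus_commute order_trans)
      hence "z > 1" using x by (simp add: field_simps)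
      thus "gi (v z) = z" "isCont v z" using gi1 ct by auto
    qed
  qed
  have dHv: "((\<lambda>y. arc_H y / v y) has_real_derivative
         (arc_p x ^ 2 / v x * (arc_p x ^ 2 - x))) (at x) \<and>
      arc_p x ^ 2 / v x * (arc_p x ^ 2 - x) > 0" if x: "x > 1" for x
  proof
    let ?s = "sqrt (6*x^2-2)"
    have vx: "v x > 0" using pos[rule_format, OF x] by simp
    have sp: "?s * ?s = 6*x^2-2" using sq_gt[OF x] by simp
    have dH: "(arc_H has_real_derivative 6*x^2-2) (at x)"
    proof -
      have "arc_H = (\<lambda>y. 2*y^3 - 2*y)"
        unfolding arc_H_def Hf_def arc_r2_def by (rule ext) (simp add: power2_eq_square power3_eq_cube algebra_simps)
      moreover have "((\<lambda>y::real. 2*y^3 - 2*y) has_real_derivative 6*x^2-2) (at x)"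
        by (auto intro!: derivative_eq_intros simp: power2_eq_square)
      ultimately show ?thesis by simp
    qed
    have d: "((\<lambda>y. arc_H y / v y) has_real_derivative
        ((6*x^2-2) * v x - arc_H x * (GG x * v x)) / (v x ^ 2)) (at x)"
      using DERIV_divide[OF dH dv[OF x]] vx by (simp add: power2_eq_square)
    have "((6*x^2-2) * v x - arc_H x * (GG x * v x)) / (v x ^ 2)
        = ((6*x^2-2) - GG x * arc_H x) / v x" using vx by (simp add: power2_eq_square field_simps)
    also have "\<dots> = ?s / v x * (?s - x)" using GG_facts(4)[OF x] sp
      by (simp add: algebra_simps diff_divide_distrib)
    also have "\<dots> = arc_p x ^ 2 / v x * (arc_p x ^ 2 - x)" using p_facts(1)[OF x] by simp
    finally show "((\<lambda>y. arc_H y / v y) has_real_derivative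
         (arc_p x ^ 2 / v x * (arc_p x ^ 2 - x))) (at x)" using d by metis
    show "arc_p x ^ 2 / v x * (arc_p x ^ 2 - x) > 0"
    proof -
      have "?s > 0" "?s - x > 0" using s_ineqs(3)[OF x] x by linarith+
      thus ?thesis using p_facts(1)[OF x] vx by simp
    qed
  qed
  have part2: "((\<lambda>w. arc_f (gi w)) has_real_derivative (arc_H x / v x)) (at (v x)) \<and>
      (\<exists>D>0. ((\<lambda>w. arc_H (gi w) / w) has_real_derivative D) (at (v x)))" if x: "x > 1" for x
  proof
    let ?s = "sqrt (6*x^2-2)"
    have vx: "v x > 0" using pos[rule_format, OF x] by simp
    have Gp: "GG x > 0" using GG_facts(1)[OF x] .
    have "((\<lambda>w. arc_f (gi w)) has_real_derivative (x * ?s) * inverse (GG x * v x)) (at (v x))"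
      using DERIV_chain2[of arc_f, OF _ dgi[OF x]] arc_f_deriv[OF x] gi1[OF x] by simp
    moreover have "(x * ?s) * inverse (GG x * v x) = arc_H x / v x"
    proof -
      have "(x * ?s) * inverse (GG x * v x) = (GG x * arc_H x) / (GG x * v x)"
        using GG_facts(4)[OF x] by (simp add: divide_inverse)
      also have "\<dots> = arc_H x / v x" using Gp by simp
      finally show ?thesis .
    qed
    ultimately show "((\<lambda>w. arc_f (gi w)) has_real_derivative (arc_H x / v x)) (at (v x))" by metis
    let ?K = "arc_p x ^ 2 / v x * (arc_p x ^ 2 - x)"
    have "((\<lambda>w. arc_H (gi w) / v (gi w)) has_real_derivative ?K * inverse (GG x * v x)) (at (v x))"
    proof -
      have "((\<lambda>y. arc_H y / v y) has_real_derivative ?K) (at (gi (v x)))"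
        using dHv[OF x] gi1[OF x] by simp
      from DERIV_chain2[OF this dgi[OF x]] show ?thesis .
    qed
    hence "((\<lambda>w. arc_H (gi w) / w) has_real_derivative ?K * inverse (GG x * v x)) (at (v x))"
      by (rule has_field_derivative_transform_within_open[where S="{0<..}"])
         (use vx gi2 in auto)
    moreover have "?K * inverse (GG x * v x) > 0"
      by (rule mult_pos_pos[OF conjunct2[OF dHv[OF x]]]) (use Gp vx in simp)
    ultimately show "\<exists>D>0. ((\<lambda>w. arc_H (gi w) / w) has_real_derivative D) (at (v x))" by blast
  qed
  show ?thesis using img part2 dHv unfolding gi_def by blast
qed

end
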